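(* Let $(W,S)$ be a finitely generated Coxeter system and $u<v$ in $W$. If $u'$ covers $u$ in the interval $[u,v]$, then $u'=(v^{S(u)})_{S(u)\cup\{s\}}\,u$ for some $s\in\mathrm{Des}(v^{S(u)})$, and $C(u')=C(u)\setminus\{s\}$.
   Context: $(W,S)$ is a finitely generated Coxeter system with length function $\ell$. For $w\in W$, $S(w)\subseteq S$ is the set of simple reflections appearing in a (any) reduced expression of $w$, $C(w)=S\setminus S(w)$, and $\mathrm{Des}(w)=\{s\in S:\ell(ws)<\ell(w)\}$. For $I\subseteq S$, $W_I$ is the parabolic subgroup generated by $I$, $X_I=\{u\in W:\ell(us)>\ell(u)\ \forall s\in I\}$, and every $w\in W$ factors uniquely as $w=w^Iw_I$ with $w^I\in X_I$, $w_I\in W_I$ (parabolic components along $I$). The partial order on $W$: $u\le v$ iff $v_{S(u)}=u$. An element $u'$ covers $u$ in $[u,v]$ if $u<u'\le v$ and there is no $w$ with $u<w<u'$. *)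

theory Defs
  imports "HOL-Algebra.Algebra"
begin

definition wprod :: "('a, 'b) monoid_scheme \<Rightarrow> 'a list \<Rightarrow> 'a" where
  "wprod G ws = foldr (\<lambda>x y. x \<otimes>\<^bsub>G\<^esub> y) ws \<one>\<^bsub>G\<^esub>"

text \<open>Coxeter exponent m(s,t): the order of st (0 encodes infinity).\<close>
definition cox_m :: "('a, 'b) monoid_scheme \<Rightarrow> 'a \<Rightarrow> 'a \<Rightarrow> nat" where
  "cox_m G s t = (if \<exists>n::nat>0. (s \<otimes>\<^bsub>G\<^esub> t) [^]\<^bsub>G\<^esub> n = \<one>\<^bsub>G\<^esub>
                  then (LEAST n::nat. n > 0 \<and> (s \<otimes>\<^bsub>G\<^esub> t) [^]\<^bsub>G\<^esub> n = \<one>\<^bsub>G\<^esub>) else 0)"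

text \<open>Coxeter relators (st)^{m(s,t)} for s,t in S with m(s,t) finite
  (including s = t, which gives ss).\<close>
definition cox_relators :: "('a, 'b) monoid_scheme \<Rightarrow> 'a set \<Rightarrow> 'a list set" where
  "cox_relators G S = {concat (replicate (cox_m G s t) [s, t]) | s t.
       s \<in> S \<and> t \<in> S \<and> cox_m G s t > 0}"

inductive cox_equiv :: "('a, 'b) monoid_scheme \<Rightarrow> 'a set \<Rightarrow> 'a list \<Rightarrow> 'a list \<Rightarrow> bool"
  for G S where
  refl: "cox_equiv G S xs xs"
| sym: "cox_equiv G S xs ys \<Longrightarrow> cox_equiv G S ys xs"
| trans: "cox_equiv G S xs ys \<Longrightarrow> cox_equiv G S ys zs \<Longrightarrow> cox_equiv G S xs zs"
| rel: "r \<in> cox_relators G S \<Longrightarrow> cox_equiv G S (xs @ r @ ys) (xs @ ys)"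

text \<open>(G,S) is a finitely generated Coxeter system: S is a finite set of involutions
  generating G, and every relation among the generators is a consequence of the
  Coxeter relations (st)^{m(s,t)} = 1, i.e. G has the Coxeter presentation on S.\<close>
definition coxeter_system :: "('a, 'b) monoid_scheme \<Rightarrow> 'a set \<Rightarrow> bool" where
  "coxeter_system G S \<longleftrightarrow>
     group G \<and> S \<subseteq> carrier G \<and> finite S \<and> \<one>\<^bsub>G\<^esub> \<notin> S \<and>
     (\<forall>s\<in>S. s \<otimes>\<^bsub>G\<^esub> s = \<one>\<^bsub>G\<^esub>) \<and>
     generate G S = carrier G \<and>
     (\<forall>ws \<in> lists S. wprod G ws = \<one>\<^bsub>G\<^esub> \<longrightarrow> cox_equiv G S ws [])"

definition cox_len :: "('a, 'b) monoid_scheme \<Rightarrow> 'a set \<Rightarrow> 'a \<Rightarrow> nat" where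
  "cox_len G S w = (LEAST n. \<exists>ws \<in> lists S. length ws = n \<and> wprod G ws = w)"

definition reduced_expr :: "('a, 'b) monoid_scheme \<Rightarrow> 'a set \<Rightarrow> 'a list \<Rightarrow> 'a \<Rightarrow> bool" where
  "reduced_expr G S ws w \<longleftrightarrow> ws \<in> lists S \<and> wprod G ws = w \<and> length ws = cox_len G S w"

definition supp :: "('a, 'b) monoid_scheme \<Rightarrow> 'a set \<Rightarrow> 'a \<Rightarrow> 'a set" where
  "supp G S w = {s. \<exists>ws. reduced_expr G S ws w \<and> s \<in> set ws}"

definition cosupp :: "('a, 'b) monoid_scheme \<Rightarrow> 'a set \<Rightarrow> 'a \<Rightarrow> 'a set" where
  "cosupp G S w = S - supp G S w"

definition descents :: "('a, 'b) monoid_scheme \<Rightarrow> 'a set \<Rightarrow> 'a \<Rightarrow> 'a set" where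
  "descents G S w = {s \<in> S. cox_len G S (w \<otimes>\<^bsub>G\<^esub> s) < cox_len G S w}"

definition parabolic :: "('a, 'b) monoid_scheme \<Rightarrow> 'a set \<Rightarrow> 'a set" where
  "parabolic G I = generate G I"

definition min_reps :: "('a, 'b) monoid_scheme \<Rightarrow> 'a set \<Rightarrow> 'a set \<Rightarrow> 'a set" where
  "min_reps G S I = {u \<in> carrier G. \<forall>s\<in>I. cox_len G S (u \<otimes>\<^bsub>G\<^esub> s) > cox_len G S u}"

text \<open>Parabolic components: w = w^I w_I with w^I in X_I and w_I in W_I.\<close>
definition par_quot :: "('a, 'b) monoid_scheme \<Rightarrow> 'a set \<Rightarrow> 'a set \<Rightarrow> 'a \<Rightarrow> 'a" where
  "par_quot G S I w = (THE u. u \<in> min_reps G S I \<and>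
      (\<exists>x \<in> parabolic G I. w = u \<otimes>\<^bsub>G\<^esub> x))"

definition par_comp :: "('a, 'b) monoid_scheme \<Rightarrow> 'a set \<Rightarrow> 'a set \<Rightarrow> 'a \<Rightarrow> 'a" where
  "par_comp G S I w = (THE x. x \<in> parabolic G I \<and>
      (\<exists>u \<in> min_reps G S I. w = u \<otimes>\<^bsub>G\<^esub> x))"

definition cox_le :: "('a, 'b) monoid_scheme \<Rightarrow> 'a set \<Rightarrow> 'a \<Rightarrow> 'a \<Rightarrow> bool" where
  "cox_le G S u v \<longleftrightarrow> u \<in> carrier G \<and> v \<in> carrier G \<and> par_comp G S (supp G S u) v = u"

definition cox_less :: "('a, 'b) monoid_scheme \<Rightarrow> 'a set \<Rightarrow> 'a \<Rightarrow> 'a \<Rightarrow> bool" where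
  "cox_less G S u v \<longleftrightarrow> cox_le G S u v \<and> u \<noteq> v"

definition covers_in :: "('a, 'b) monoid_scheme \<Rightarrow> 'a set \<Rightarrow> 'a \<Rightarrow> 'a \<Rightarrow> 'a \<Rightarrow> bool" where
  "covers_in G S u v u' \<longleftrightarrow> cox_less G S u u' \<and> cox_le G S u' v \<and>
     \<not> (\<exists>w \<in> carrier G. cox_less G S u w \<and> cox_less G S w u')"

end

theory Submission
  imports Defs
begin


fun refls :: "('a, 'b) monoid_scheme \<Rightarrow> 'a list \<Rightarrow> 'a list" where
  "refls G [] = []"
| "refls G (a # ws) = a # map (\<lambda>t. a \<otimes>\<^bsub>G\<^esub> t \<otimes>\<^bsub>G\<^esub> a) (refls G ws)"

lemma wprod_Nil[simp]: "wprod G [] = \<one>\<^bsub>G\<^esub>" by (simp add: wprod_def)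
lemma wprod_Cons[simp]: "wprod G (a # ws) = a \<otimes>\<^bsub>G\<^esub> wprod G ws" by (simp add: wprod_def)

locale coxsys =
  fixes G (structure) and S
  assumes cs: "coxeter_system G S"
begin

sublocale group G using cs unfolding coxeter_system_def by auto

lemma S_carr: "S \<subseteq> carrier G" using cs unfolding coxeter_system_def by auto
lemma S_fin: "finite S" using cs unfolding coxeter_system_def by auto
lemma one_notin_S: "\<one> \<notin> S" using cs unfolding coxeter_system_def by auto
lemma S_inv2: "s \<in> S \<Longrightarrow> s \<otimes> s = \<one>" using cs unfolding coxeter_system_def by auto
lemma S_gen: "generate G S = carrier G" using cs unfolding coxeter_system_def by auto
lemma S_pres: "ws \<in> lists S \<Longrightarrow> wprod G ws = \<one> \<Longrightarrow> cox_equiv G S ws []"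
  using cs unfolding coxeter_system_def by auto

lemma S_c[simp]: "s \<in> S \<Longrightarrow> s \<in> carrier G" using S_carr by auto
lemma S_inv[simp]: "s \<in> S \<Longrightarrow> inv s = s"
  using S_inv2 by (simp add: inv_equality)

lemma wprod_carr[simp]: "set ws \<subseteq> carrier G \<Longrightarrow> wprod G ws \<in> carrier G"
  by (induction ws) auto
lemma wprod_carrS[simp]: "ws \<in> lists S \<Longrightarrow> wprod G ws \<in> carrier G"
  by (induction ws) auto
lemma wprod_append: "set xs \<subseteq> carrier G \<Longrightarrow> set ys \<subseteq> carrier G \<Longrightarrow>
   wprod G (xs @ ys) = wprod G xs \<otimes> wprod G ys"
  by (induction xs) (auto simp: m_assoc)
lemma wprod_appendS: "xs \<in> lists S \<Longrightarrow> ys \<in> lists S \<Longrightarrow>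
   wprod G (xs @ ys) = wprod G xs \<otimes> wprod G ys"
  by (rule wprod_append) auto
lemma wprod_rev: "ws \<in> lists S \<Longrightarrow> wprod G (rev ws) = inv (wprod G ws)"
proof (induction ws)
  case (Cons a ws)
  have "wprod G (rev ws @ [a]) = wprod G (rev ws) \<otimes> wprod G [a]"
    using Cons by (intro wprod_appendS) auto
  then show ?case using Cons by (simp add: inv_mult_group)
qed simp

lemma length_refls[simp]: "length (refls G ws) = length ws"
  by (induction ws) auto

lemma refls_carr: "ws \<in> lists S \<Longrightarrow> set (refls G ws) \<subseteq> carrier G"
  by (induction ws) auto

lemma refls_append: "xs \<in> lists S \<Longrightarrow> ys \<in> lists S \<Longrightarrow>
  refls G (xs @ ys) = refls G xs @ map (\<lambda>t. wprod G xs \<otimes> t \<otimes> inv (wprod G xs)) (refls G ys)"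
proof (induction xs)
  case Nil
  have "map (\<lambda>t. \<one> \<otimes> t \<otimes> inv \<one>) (refls G ys) = refls G ys"
    using refls_carr[OF Nil(2)] by (intro map_idI) auto
  then show ?case by simp
next
  case (Cons a xs)
  have "\<forall>t\<in>set (refls G ys). a \<otimes> (wprod G xs \<otimes> t \<otimes> inv (wprod G xs)) \<otimes> a
     = a \<otimes> wprod G xs \<otimes> t \<otimes> inv (a \<otimes> wprod G xs)"
  proof
    fix t assume "t \<in> set (refls G ys)"
    then have "t \<in> carrier G" using refls_carr[of ys] Cons by auto
    then show "a \<otimes> (wprod G xs \<otimes> t \<otimes> inv (wprod G xs)) \<otimes> a
     = a \<otimes> wprod G xs \<otimes> t \<otimes> inv (a \<otimes> wprod G xs)"
      using Cons by (simp add: m_assoc inv_mult_group)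
  qed
  then show ?case using Cons by simp
qed

lemma refls_del: "ws \<in> lists S \<Longrightarrow> i < length ws \<Longrightarrow>
   refls G ws ! i \<otimes> wprod G ws = wprod G (take i ws @ drop (Suc i) ws)"
proof (induction ws arbitrary: i)
  case (Cons a ws)
  show ?case
  proof (cases i)
    case 0
    then show ?thesis using Cons by (simp add: m_assoc[symmetric] S_inv2)
  next
    case (Suc j)
    have IH: "refls G ws ! j \<otimes> wprod G ws = wprod G (take j ws @ drop (Suc j) ws)"
      using Cons Suc by auto
    have c: "refls G ws ! j \<in> carrier G" using refls_carr[of ws] Cons Suc
      by (auto intro!: nth_mem[THEN subsetD[rotated]])
    have "refls G (a # ws) ! i \<otimes> wprod G (a # ws) = a \<otimes> (refls G ws ! j \<otimes> (a \<otimes> a) \<otimes> wprod G ws)"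
      using Cons Suc c by (simp add: m_assoc)
    also have "\<dots> = a \<otimes> wprod G (take j ws @ drop (Suc j) ws)" using IH Cons c by (simp add: S_inv2)
    finally show ?thesis using Suc by simp
  qed
qed simp

end


context coxsys
begin
lemma wprod_rel: "s \<in> S \<Longrightarrow> t \<in> S \<Longrightarrow>
   wprod G (concat (replicate m [s, t])) = (s \<otimes> t) [^] m"
proof (induction m)
  case (Suc m)
  have "(s \<otimes> t) [^] Suc m = (s \<otimes> t) \<otimes> (s \<otimes> t) [^] m" using Suc by (intro nat_pow_Suc2) simp
  then show ?case using Suc by (simp add: m_assoc del: nat_pow_Suc)
qed simp

lemma refls_rel: "s \<in> S \<Longrightarrow> t \<in> S \<Longrightarrow>
   refls G (concat (replicate m [s, t])) = map (\<lambda>i. (s \<otimes> t) [^] i \<otimes> s) [0..<2*m]"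
proof (induction m)
  case (Suc m)
  have e: "2 * Suc m = Suc (Suc (2*m))" by simp
  have "\<forall>i. s \<otimes> (t \<otimes> ((s \<otimes> t) [^] i \<otimes> s) \<otimes> t) \<otimes> s = (s \<otimes> t) [^] Suc (Suc i) \<otimes> s"
  proof
    fix i
    have "(s \<otimes> t) [^] Suc (Suc i) = (s \<otimes> t) [^] Suc i \<otimes> (s \<otimes> t)" by (rule nat_pow_Suc)
    also have "\<dots> = ((s \<otimes> t) \<otimes> (s \<otimes> t) [^] i) \<otimes> (s \<otimes> t)"
      using Suc nat_pow_Suc2[of "s \<otimes> t" i] by simp
    finally have "(s \<otimes> t) [^] Suc (Suc i) = (s \<otimes> t) \<otimes> ((s \<otimes> t) [^] i \<otimes> (s \<otimes> t))"
      using Suc by (simp add: m_assoc del: nat_pow_Suc)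
    then show "s \<otimes> (t \<otimes> ((s \<otimes> t) [^] i \<otimes> s) \<otimes> t) \<otimes> s = (s \<otimes> t) [^] Suc (Suc i) \<otimes> s"
      using Suc by (simp add: m_assoc del: nat_pow_Suc)
  qed
  then show ?case using Suc unfolding e map_upt_Suc by (simp add: m_assoc)
qed simp

lemma relator_info: "r \<in> cox_relators G S \<Longrightarrow>
  \<exists>s t m. s \<in> S \<and> t \<in> S \<and> r = concat (replicate m [s, t]) \<and> (s \<otimes> t) [^] m = \<one>"
proof -
  assume "r \<in> cox_relators G S"
  then obtain s t where st: "s \<in> S" "t \<in> S" "cox_m G s t > 0" "r = concat (replicate (cox_m G s t) [s, t])"
    unfolding cox_relators_def by auto
  then have ex: "\<exists>n::nat>0. (s \<otimes> t) [^] n = \<one>" unfolding cox_m_def by (auto split: if_splits)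
  then have "cox_m G s t = (LEAST n::nat. n > 0 \<and> (s \<otimes> t) [^] n = \<one>)" unfolding cox_m_def by simp
  moreover have "(\<lambda>n. n > 0 \<and> (s \<otimes> t) [^] n = \<one>) (LEAST n::nat. n > 0 \<and> (s \<otimes> t) [^] n = \<one>)"
    using ex by (rule LeastI_ex)
  ultimately show ?thesis using st by metis
qed

lemma relator_wprod: "r \<in> cox_relators G S \<Longrightarrow> wprod G r = \<one>"
  using relator_info wprod_rel by metis

lemma relator_S: "r \<in> cox_relators G S \<Longrightarrow> r \<in> lists S"
proof -
  assume "r \<in> cox_relators G S"
  then obtain s t m where "s \<in> S" "t \<in> S" "r = concat (replicate m [s, t])"
    using relator_info by blast
  then show ?thesis by (induction m arbitrary: r) auto
qed

lemma relator_double: "r \<in> cox_relators G S \<Longrightarrow> \<exists>L. refls G r = L @ L \<and> even (length r)"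
proof -
  assume "r \<in> cox_relators G S"
  then obtain s t m where st: "s \<in> S" "t \<in> S" "r = concat (replicate m [s, t])" "(s \<otimes> t) [^] m = \<one>"
    using relator_info by blast
  define f where "f = (\<lambda>i::nat. (s \<otimes> t) [^] i \<otimes> s)"
  have per: "f (i + m) = f i" for i
    unfolding f_def using st by (simp add: nat_pow_mult[symmetric])
  have "[0..<2*m] = [0..<m] @ [m..<m+m]" by (simp add: upt_add_eq_append[of 0 m m, simplified] mult_2)
  moreover have "map f [m..<m+m] = map f [0..<m]"
    unfolding map_add_upt[symmetric] using per by simp
  ultimately have "map f [0..<2*m] = map f [0..<m] @ map f [0..<m]" by simp
  moreover have "length (concat (replicate m [s, t])) = 2 * m" by (induction m) auto
  then have "length r = 2 * m" using st by simp
  ultimately show ?thesis using refls_rel[OF st(1,2), of m] st(3) unfolding f_def by auto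
qed

definition filtS :: "'a list \<Rightarrow> 'a list" where "filtS xs = filter (\<lambda>x. x \<in> S) xs"

lemma filtS_S[simp]: "xs \<in> lists S \<Longrightarrow> filtS xs = xs"
  unfolding filtS_def by (auto simp: filter_id_conv)
lemma filtS_lists[simp]: "filtS xs \<in> lists S"
  unfolding filtS_def by auto
lemma filtS_append[simp]: "filtS (xs @ ys) = filtS xs @ filtS ys"
  unfolding filtS_def by auto

lemma count_map_double: "count_list (map f (L @ L)) t = 2 * count_list (map f L) t"
  by simp

lemma map_conj_one: "set xs \<subseteq> carrier G \<Longrightarrow> map (\<lambda>t. \<one> \<otimes> t \<otimes> inv \<one>) xs = xs"
  by (intro map_idI) auto

lemma equiv_inv: "cox_equiv G S xs ys \<Longrightarrow> even (length (filtS xs) + length (filtS ys)) \<and>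
   (\<forall>t. even (count_list (refls G (filtS xs)) t + count_list (refls G (filtS ys)) t))"
proof (induction rule: cox_equiv.induct)
  case (refl xs)
  then show ?case by auto
next
  case (sym xs ys)
  then show ?case by (simp add: add.commute)
next
  case (trans xs ys zs)
  then show ?case by (auto simp: even_add)
next
  case (rel r xs ys)
  have rS: "r \<in> lists S" using rel relator_S by auto
  have r1: "wprod G r = \<one>" using rel relator_wprod by auto
  obtain L where L: "refls G r = L @ L" "even (length r)" using relator_double rel by blast
  define A where "A = filtS xs"
  define B where "B = filtS ys"
  have AB: "A \<in> lists S" "B \<in> lists S" unfolding A_def B_def by auto
  define c where "c = (\<lambda>t. wprod G A \<otimes> t \<otimes> inv (wprod G A))"
  have "refls G (r @ B) = L @ L @ refls G B"
    using refls_append[of r B] rS AB r1 L map_conj_one[OF refls_carr[OF AB(2)]] by simp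
  then have e1: "refls G (A @ r @ B) = refls G A @ map c (L @ L) @ map c (refls G B)"
    using refls_append[of A "r @ B"] AB rS unfolding c_def by simp
  have e2: "refls G (A @ B) = refls G A @ map c (refls G B)"
    using refls_append[of A B] AB unfolding c_def by auto
  show ?case unfolding filtS_append filtS_S[OF rS] A_def[symmetric] B_def[symmetric]
    using e1 e2 L(2) by (simp add: even_add) blast
qed

lemma relator_aa: "a \<in> S \<Longrightarrow> [a, a] \<in> cox_relators G S"
proof -
  assume a: "a \<in> S"
  have ex: "\<exists>n::nat>0. (a \<otimes> a) [^] n = \<one>" using a S_inv2 by (intro exI[of _ 1]) auto
  have "(LEAST n::nat. n > 0 \<and> (a \<otimes> a) [^] n = \<one>) = 1"
    using a S_inv2 by (intro Least_equality) auto
  then have "cox_m G a a = 1" using ex unfolding cox_m_def by simp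
  then show ?thesis unfolding cox_relators_def using a
    by (auto intro!: exI[of _ a])
qed

lemma equiv_cong: "cox_equiv G S xs ys \<Longrightarrow> cox_equiv G S (as @ xs @ bs) (as @ ys @ bs)"
proof (induction rule: cox_equiv.induct)
  case (rel r xs ys)
  then show ?case using cox_equiv.rel[of r G S "as @ xs" "ys @ bs"] by simp
next
  case (refl xs) show ?case by (rule cox_equiv.refl)
next
  case (sym xs ys) then show ?case by (blast intro: cox_equiv.sym)
next
  case (trans xs ys zs) then show ?case by (blast intro: cox_equiv.trans)
qed

lemma equiv_rev: "ws \<in> lists S \<Longrightarrow> cox_equiv G S (rev ws @ ws) []"
proof (induction ws)
  case Nil then show ?case by (simp add: cox_equiv.refl)
next
  case (Cons a ws)
  have "cox_equiv G S (rev ws @ [a, a] @ ws) (rev ws @ ws)"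
    using cox_equiv.rel[OF relator_aa] Cons by auto
  moreover have "cox_equiv G S (rev ws @ ws) []" using Cons by simp
  ultimately have "cox_equiv G S (rev ws @ [a, a] @ ws) []" by (rule cox_equiv.trans)
  then show ?case by simp
qed

lemma equiv_of_eq: "ws \<in> lists S \<Longrightarrow> ws' \<in> lists S \<Longrightarrow> wprod G ws = wprod G ws' \<Longrightarrow>
  cox_equiv G S ws ws'"
proof -
  assume a: "ws \<in> lists S" "ws' \<in> lists S" "wprod G ws = wprod G ws'"
  have "wprod G (ws @ rev ws') = wprod G ws \<otimes> wprod G (rev ws')" using a
    by (intro wprod_appendS) auto
  then have "wprod G (ws @ rev ws') = \<one>" using a
    by (simp add: wprod_rev)
  moreover have "ws @ rev ws' \<in> lists S" using a by auto
  ultimately have 1: "cox_equiv G S (ws @ rev ws') []" using S_pres by blast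
  have 2: "cox_equiv G S (ws @ rev ws' @ ws') (ws @ [] @ [])"
    using equiv_cong[OF equiv_rev[OF a(2)], of ws "[]"] by simp
  have 3: "cox_equiv G S ([] @ (ws @ rev ws') @ ws') ([] @ [] @ ws')"
    using equiv_cong[OF 1] by blast
  have 2: "cox_equiv G S ws (ws @ rev ws' @ ws')" using 2 by (simp add: cox_equiv.sym)
  have 3: "cox_equiv G S (ws @ rev ws' @ ws') ws'" using 3 by simp
  show ?thesis using 2 3 by (rule cox_equiv.trans)
qed

lemma parity: "ws \<in> lists S \<Longrightarrow> ws' \<in> lists S \<Longrightarrow> wprod G ws = wprod G ws' \<Longrightarrow>
  even (length ws + length ws') \<and> (\<forall>t. even (count_list (refls G ws) t + count_list (refls G ws') t))"
proof -
  assume a: "ws \<in> lists S" "ws' \<in> lists S" "wprod G ws = wprod G ws'"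
  have "cox_equiv G S ws ws'" using a by (rule equiv_of_eq)
  from equiv_inv[OF this] show ?thesis using a by simp
qed

end


context coxsys
begin

declare in_lists_conv_set[simp]

abbreviation len where "len w \<equiv> cox_len G S w"

lemma lists_sub: "I \<subseteq> S \<Longrightarrow> ws \<in> lists I \<Longrightarrow> ws \<in> lists S"
  by auto

lemma gen_words: "I \<subseteq> S \<Longrightarrow> generate G I = {wprod G ws | ws. ws \<in> lists I}"
proof
  assume I: "I \<subseteq> S"
  show "generate G I \<subseteq> {wprod G ws | ws. ws \<in> lists I}"
  proof
    fix x assume "x \<in> generate G I"
    then show "x \<in> {wprod G ws | ws. ws \<in> lists I}"
    proof (induction rule: generate.induct)
      case one
      then show ?case by (auto intro!: exI[of _ "[]"])
    next
      case (incl h)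
      then show ?case using I by (auto intro!: exI[of _ "[h]"])
    next
      case (inv h)
      then show ?case using I by (auto intro!: exI[of _ "[h]"])
    next
      case (eng h1 h2)
      then obtain xs ys where xy: "xs \<in> lists I" "ys \<in> lists I" "h1 = wprod G xs" "h2 = wprod G ys" by auto
      then have "h1 \<otimes> h2 = wprod G (xs @ ys)" using wprod_appendS[of xs ys] lists_sub[OF I] by simp
      moreover have "xs @ ys \<in> lists I" using xy by auto
      ultimately show ?case by blast
    qed
  qed
  show "{wprod G ws | ws. ws \<in> lists I} \<subseteq> generate G I"
  proof
    fix x assume "x \<in> {wprod G ws | ws. ws \<in> lists I}"
    then obtain ws where ws: "ws \<in> lists I" "x = wprod G ws" by auto
    have "wprod G ws \<in> generate G I" using ws(1)
    proof (induction ws)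
      case Nil then show ?case by (simp add: generate.one)
    next
      case (Cons a ws)
      then show ?case using generate.eng[OF generate.incl[of a I G]] by simp
    qed
    then show "x \<in> generate G I" using ws by simp
  qed
qed

lemma par_words: "I \<subseteq> S \<Longrightarrow> parabolic G I = {wprod G ws | ws. ws \<in> lists I}"
  unfolding parabolic_def by (rule gen_words)

lemma par_wprod: "I \<subseteq> S \<Longrightarrow> ws \<in> lists I \<Longrightarrow> wprod G ws \<in> parabolic G I"
  using par_words by auto

lemma par_carr: "I \<subseteq> S \<Longrightarrow> x \<in> parabolic G I \<Longrightarrow> x \<in> carrier G"
proof -
  assume I: "I \<subseteq> S" "x \<in> parabolic G I"
  then obtain xs where "xs \<in> lists I" "x = wprod G xs" using par_words by auto
  then show ?thesis using lists_sub[OF I(1)] by simp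
qed

lemma par_mult: "I \<subseteq> S \<Longrightarrow> x \<in> parabolic G I \<Longrightarrow> y \<in> parabolic G I \<Longrightarrow> x \<otimes> y \<in> parabolic G I"
proof -
  assume I: "I \<subseteq> S" "x \<in> parabolic G I" "y \<in> parabolic G I"
  then obtain xs ys where "xs \<in> lists I" "ys \<in> lists I" "x = wprod G xs" "y = wprod G ys"
    using par_words by auto
  moreover then have "x \<otimes> y = wprod G (xs @ ys)" using wprod_appendS[of xs ys] lists_sub[OF I(1)] by simp
  moreover have "xs @ ys \<in> lists I" using calculation by auto
  ultimately show ?thesis using I par_wprod by simp
qed

lemma par_inv: "I \<subseteq> S \<Longrightarrow> x \<in> parabolic G I \<Longrightarrow> inv x \<in> parabolic G I"
proof -
  assume I: "I \<subseteq> S" "x \<in> parabolic G I"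
  then obtain xs where "xs \<in> lists I" "x = wprod G xs"
    using par_words by auto
  moreover then have "inv x = wprod G (rev xs)" using wprod_rev[of xs] lists_sub[OF I(1)] by simp
  moreover have "rev xs \<in> lists I" using calculation(1) by (simp add: in_lists_conv_set)
  ultimately show ?thesis using I par_wprod by simp
qed

lemma par_one: "I \<subseteq> S \<Longrightarrow> \<one> \<in> parabolic G I"
  using par_wprod[of I "[]"] by simp

lemma par_mono: "I \<subseteq> J \<Longrightarrow> J \<subseteq> S \<Longrightarrow> parabolic G I \<subseteq> parabolic G J"
proof
  fix x assume a: "I \<subseteq> J" "J \<subseteq> S" "x \<in> parabolic G I"
  then obtain xs where "xs \<in> lists I" "x = wprod G xs" using par_words[of I] by auto
  moreover then have "xs \<in> lists J" using a by auto
  ultimately show "x \<in> parabolic G J" using a par_wprod by simp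
qed

lemma par_S: "s \<in> I \<Longrightarrow> I \<subseteq> S \<Longrightarrow> s \<in> parabolic G I"
  using par_wprod[of I "[s]"] by auto

lemma carrier_words: "w \<in> carrier G \<Longrightarrow> \<exists>ws \<in> lists S. wprod G ws = w"
  using gen_words[of S] S_gen by auto

lemma len_exists: "w \<in> carrier G \<Longrightarrow> \<exists>ws. reduced_expr G S ws w"
proof -
  assume "w \<in> carrier G"
  then have ex: "\<exists>n ws. ws \<in> lists S \<and> length ws = n \<and> wprod G ws = w"
    using carrier_words by blast
  have "\<exists>ws \<in> lists S. length ws = cox_len G S w \<and> wprod G ws = w"
    unfolding cox_len_def using LeastI_ex[of "\<lambda>n. \<exists>ws \<in> lists S. length ws = n \<and> wprod G ws = w"] ex
    by blast
  then show ?thesis unfolding reduced_expr_def by blast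
qed

lemma len_le: "ws \<in> lists S \<Longrightarrow> len (wprod G ws) \<le> length ws"
  unfolding cox_len_def by (rule Least_le) blast

lemma red_carr: "reduced_expr G S ws w \<Longrightarrow> w \<in> carrier G"
  unfolding reduced_expr_def using wprod_carrS by blast

lemma len_0: "w \<in> carrier G \<Longrightarrow> len w = 0 \<Longrightarrow> w = \<one>"
proof -
  assume a: "w \<in> carrier G" "len w = 0"
  then obtain ws where "reduced_expr G S ws w" using len_exists by metis
  then have "ws = []" "wprod G ws = w" using a unfolding reduced_expr_def by auto
  then show ?thesis by simp
qed

lemma len_one[simp]: "len \<one> = 0"
  using len_le[of "[]"] by simp

lemma len_S: "s \<in> S \<Longrightarrow> len s = 1"
proof -
  assume s: "s \<in> S"
  have "len s \<le> 1" using len_le[of "[s]"] s by simp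
  moreover have "len s \<noteq> 0" using len_0[of s] one_notin_S s by auto
  ultimately show ?thesis by simp
qed

lemma len_inv_le: "w \<in> carrier G \<Longrightarrow> len (inv w) \<le> len w"
proof -
  assume "w \<in> carrier G"
  then obtain ws where "reduced_expr G S ws w" using len_exists by metis
  then show ?thesis using len_le[of "rev ws"] wprod_rev[of ws] unfolding reduced_expr_def by auto
qed

lemma len_inv: "w \<in> carrier G \<Longrightarrow> len (inv w) = len w"
  using len_inv_le[of w] len_inv_le[of "inv w"] by simp

lemma red_rev: "reduced_expr G S ws w \<Longrightarrow> reduced_expr G S (rev ws) (inv w)"
  using len_inv[of w] wprod_rev[of ws] unfolding reduced_expr_def by auto

lemma len_mult_le: "w \<in> carrier G \<Longrightarrow> s \<in> S \<Longrightarrow> len (w \<otimes> s) \<le> len w + 1"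
proof -
  assume a: "w \<in> carrier G" "s \<in> S"
  then obtain ws where r: "reduced_expr G S ws w" using len_exists by metis
  then show ?thesis using len_le[of "ws @ [s]"] wprod_appendS[of ws "[s]"] a
    unfolding reduced_expr_def by auto
qed

lemma len_parity: "w \<in> carrier G \<Longrightarrow> s \<in> S \<Longrightarrow> len (w \<otimes> s) \<noteq> len w"
proof -
  assume a: "w \<in> carrier G" "s \<in> S"
  then obtain ws where r: "reduced_expr G S ws w" using len_exists by metis
  have "w \<otimes> s \<in> carrier G" using a by simp
  then obtain ws' where r': "reduced_expr G S ws' (w \<otimes> s)" using len_exists by metis
  have W: "ws \<in> lists S" "wprod G ws = w" "length ws = len w" using r unfolding reduced_expr_def by auto
  have W': "ws' \<in> lists S" "wprod G ws' = w \<otimes> s" "length ws' = len (w \<otimes> s)" using r' unfolding reduced_expr_def by auto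
  have L: "ws @ [s] \<in> lists S" using W a by simp
  have "wprod G (ws @ [s]) = wprod G ws \<otimes> wprod G [s]"
    using W(1) a by (intro wprod_appendS) auto
  then have "wprod G (ws @ [s]) = wprod G ws'" using W W' a by simp
  from parity[OF L W'(1) this] have "even (length (ws @ [s]) + length ws')" by blast
  then have ev2: "even (length ws + length ws' + 1)" by simp
  show ?thesis
  proof
    assume "len (w \<otimes> s) = len w"
    then have "length ws' = length ws" using W(3) W'(3) by simp
    then show False using ev2 by presburger
  qed
qed

lemma len_mult: "w \<in> carrier G \<Longrightarrow> s \<in> S \<Longrightarrow> len (w \<otimes> s) = len w + 1 \<or> len (w \<otimes> s) + 1 = len w"
proof -
  assume a: "w \<in> carrier G" "s \<in> S"
  have "w \<otimes> s \<otimes> s = w" using a by (simp add: m_assoc S_inv2)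
  then have "len w \<le> len (w \<otimes> s) + 1" using len_mult_le[of "w \<otimes> s" s] a by simp
  then show ?thesis using len_mult_le[of w s] len_parity[of w s] a by linarith
qed

lemma set_del: "set (take i ws @ drop (Suc i) ws) \<subseteq> set ws"
  by (auto dest: in_set_takeD in_set_dropD)

lemma count_map_inj: "(\<forall>x\<in>set xs. f x = f y \<longleftrightarrow> x = y) \<Longrightarrow> count_list (map f xs) (f y) = count_list xs y"
  by (induction xs) auto

lemma exchange_left: "reduced_expr G S ws w \<Longrightarrow> s \<in> S \<Longrightarrow> len (s \<otimes> w) < len w \<Longrightarrow>
  \<exists>i < length ws. s \<otimes> w = wprod G (take i ws @ drop (Suc i) ws)"
proof -
  assume r: "reduced_expr G S ws w" and s: "s \<in> S" and l: "len (s \<otimes> w) < len w"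
  have w: "w \<in> carrier G" "ws \<in> lists S" using r unfolding reduced_expr_def by auto
  have "s \<otimes> w \<in> carrier G" using w s by simp
  then obtain ws' where r': "reduced_expr G S ws' (s \<otimes> w)" using len_exists by metis
  have ws': "ws' \<in> lists S" "wprod G ws' = s \<otimes> w" "length ws' = len (s \<otimes> w)"
    using r' unfolding reduced_expr_def by auto
  have "wprod G (s # ws') = w" using ws' s w by (simp add: m_assoc[symmetric] S_inv2)
  then have ev: "even (count_list (refls G ws) s + count_list (refls G (s # ws')) s)"
    using parity[of ws "s # ws'"] r w s ws' unfolding reduced_expr_def by auto
  have "count_list (map (\<lambda>t. s \<otimes> t \<otimes> s) (refls G ws')) (s \<otimes> s \<otimes> s) = count_list (refls G ws') s"
  proof (rule count_map_inj, intro ballI)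
    fix x assume "x \<in> set (refls G ws')"
    then have x: "x \<in> carrier G" using refls_carr[OF ws'(1)] by auto
    show "(s \<otimes> x \<otimes> s = s \<otimes> s \<otimes> s) = (x = s)"
      using x s by (metis S_c m_assoc r_cancel l_cancel m_closed)
  qed
  then have c: "count_list (refls G (s # ws')) s = 1 + count_list (refls G ws') s"
    using s by (simp add: S_inv2)
  show ?thesis
  proof (cases "s \<in> set (refls G ws)")
    case True
    then obtain i where i: "i < length ws" "refls G ws ! i = s" by (auto simp: in_set_conv_nth)
    then show ?thesis using refls_del[OF w(2) i(1)] r unfolding reduced_expr_def by auto
  next
    case False
    then have "count_list (refls G ws) s = 0" by (simp add: count_list_0_iff)
    then have "odd (count_list (refls G ws') s)" using ev c by simp
    then have "count_list (refls G ws') s \<noteq> 0" by (intro notI) simp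
    then have "s \<in> set (refls G ws')" by (simp add: count_list_0_iff)
    then obtain i where i: "i < length ws'" "refls G ws' ! i = s" by (auto simp: in_set_conv_nth)
    have "s \<otimes> (s \<otimes> w) = wprod G (take i ws' @ drop (Suc i) ws')"
      using refls_del[OF ws'(1) i(1)] i ws' by auto
    then have "w = wprod G (take i ws' @ drop (Suc i) ws')" using s w by (simp add: m_assoc[symmetric] S_inv2)
    moreover have "take i ws' @ drop (Suc i) ws' \<in> lists S" using ws'(1) set_del[of i ws'] by auto
    ultimately have "len w \<le> length ws' - 1" using len_le[of "take i ws' @ drop (Suc i) ws'"] i by simp
    then have False using l ws'(3) i by linarith
    then show ?thesis ..
  qed
qed

end


context coxsys
begin

lemma red_D: "reduced_expr G S ws w \<Longrightarrow> ws \<in> lists S \<and> wprod G ws = w \<and> length ws = len w"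
  unfolding reduced_expr_def by blast

lemma del_lists: "ws \<in> lists A \<Longrightarrow> take i ws @ drop (Suc i) ws \<in> lists A"
  using set_del[of i ws] by (auto simp del: in_lists_conv_set simp: in_lists_conv_set)

lemma exchange_right: "reduced_expr G S ws w \<Longrightarrow> s \<in> S \<Longrightarrow> len (w \<otimes> s) < len w \<Longrightarrow>
  \<exists>i < length ws. w \<otimes> s = wprod G (take i ws @ drop (Suc i) ws)"
proof -
  assume r: "reduced_expr G S ws w" and s: "s \<in> S" and l: "len (w \<otimes> s) < len w"
  have W: "ws \<in> lists S" "wprod G ws = w" "length ws = len w" using red_D[OF r] by auto
  have w: "w \<in> carrier G" using red_carr[OF r] .
  have rr: "reduced_expr G S (rev ws) (inv w)" using red_rev[OF r] .
  have e: "s \<otimes> inv w = inv (w \<otimes> s)" using w s by (simp add: inv_mult_group)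
  have "len (s \<otimes> inv w) < len (inv w)" unfolding e using len_inv[of "w \<otimes> s"] len_inv[OF w] w s l by simp
  from exchange_left[OF rr s this] obtain i where i: "i < length (rev ws)"
    "s \<otimes> inv w = wprod G (take i (rev ws) @ drop (Suc i) (rev ws))" by blast
  define j where "j = length ws - Suc i"
  have j: "j < length ws" "Suc j = length ws - i" "length ws - Suc j = i" using i unfolding j_def by auto
  have X: "take i (rev ws) @ drop (Suc i) (rev ws) \<in> lists S" using W(1) by (intro del_lists) simp
  have "rev (take i (rev ws) @ drop (Suc i) (rev ws)) = take j ws @ drop (Suc j) ws"
    using j i(1) by (simp add: take_rev drop_rev j_def)
  moreover have "w \<otimes> s = inv (s \<otimes> inv w)" using w s e by simp
  ultimately have "w \<otimes> s = wprod G (take j ws @ drop (Suc j) ws)"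
    using i(2) wprod_rev[OF X] by simp
  then show ?thesis using j by blast
qed

lemma reduce_word: "ws \<in> lists S \<Longrightarrow> \<exists>ys. reduced_expr G S ys (wprod G ws) \<and> set ys \<subseteq> set ws"
proof (induction ws rule: rev_induct)
  case Nil
  then show ?case unfolding reduced_expr_def by (intro exI[of _ "[]"]) simp
next
  case (snoc a xs)
  have xs: "xs \<in> lists S" and a: "a \<in> S" using snoc.prems by auto
  obtain ys where ys: "reduced_expr G S ys (wprod G xs)" "set ys \<subseteq> set xs" using snoc.IH[OF xs] by blast
  define w where "w = wprod G xs"
  have w: "w \<in> carrier G" unfolding w_def using xs by simp
  have Y: "ys \<in> lists S" "wprod G ys = w" "length ys = len w" using red_D[OF ys(1)] unfolding w_def by auto
  have e: "wprod G (xs @ [a]) = w \<otimes> a" unfolding w_def using xs a wprod_appendS[of xs "[a]"] by simp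
  consider "len (w \<otimes> a) = len w + 1" | "len (w \<otimes> a) + 1 = len w" using len_mult[OF w a] by blast
  then show ?case
  proof cases
    case 1
    have "reduced_expr G S (ys @ [a]) (w \<otimes> a)" unfolding reduced_expr_def
      using Y a 1 wprod_appendS[of ys "[a]"] by simp
    then show ?thesis unfolding e using ys(2) by (intro exI[of _ "ys @ [a]"]) auto
  next
    case 2
    then have "len (w \<otimes> a) < len w" by simp
    from exchange_right[OF ys(1)[folded w_def] a this] obtain i where i: "i < length ys"
      "w \<otimes> a = wprod G (take i ys @ drop (Suc i) ys)" by blast
    have "reduced_expr G S (take i ys @ drop (Suc i) ys) (w \<otimes> a)" unfolding reduced_expr_def
      using i Y 2 del_lists[OF Y(1), of i] by simp
    moreover have "set (take i ys @ drop (Suc i) ys) \<subseteq> set (xs @ [a])" using set_del[of i ys] ys(2) by auto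
    ultimately show ?thesis unfolding e by blast
  qed
qed

lemma par_red: "I \<subseteq> S \<Longrightarrow> w \<in> parabolic G I \<Longrightarrow> \<exists>ys. reduced_expr G S ys w \<and> set ys \<subseteq> I"
proof -
  assume I: "I \<subseteq> S" "w \<in> parabolic G I"
  then obtain ws where ws: "ws \<in> lists I" "w = wprod G ws" using par_words by auto
  have "ws \<in> lists S" using ws(1) I(1) by auto
  from reduce_word[OF this] obtain ys where "reduced_expr G S ys w" "set ys \<subseteq> set ws" using ws by blast
  then show ?thesis using ws(1) by auto
qed

lemma S_in_par: "I \<subseteq> S \<Longrightarrow> s \<in> S \<Longrightarrow> s \<in> parabolic G I \<Longrightarrow> s \<in> I"
proof -
  assume a: "I \<subseteq> S" "s \<in> S" "s \<in> parabolic G I"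
  from par_red[OF a(1) a(3)] obtain ys where ys: "reduced_expr G S ys s" "set ys \<subseteq> I" by blast
  have "length ys = 1" "wprod G ys = s" using red_D[OF ys(1)] len_S[OF a(2)] by auto
  then obtain b where "ys = [b]" by (cases ys) auto
  then show ?thesis using ys(2) \<open>wprod G ys = s\<close> a by auto
qed

lemma red_in_par: "I \<subseteq> S \<Longrightarrow> reduced_expr G S ws w \<Longrightarrow> w \<in> parabolic G I \<Longrightarrow> set ws \<subseteq> I"
proof (induction ws arbitrary: w rule: rev_induct)
  case Nil
  then show ?case by simp
next
  case (snoc s xs)
  have W: "xs @ [s] \<in> lists S" "wprod G (xs @ [s]) = w" "length (xs @ [s]) = len w" using red_D[OF snoc.prems(2)] by auto
  have xs: "xs \<in> lists S" and s: "s \<in> S" using W(1) by auto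
  have w: "w \<in> carrier G" using red_carr[OF snoc.prems(2)] .
  have "w = wprod G xs \<otimes> s" using W(2) xs s wprod_appendS[of xs "[s]"] by simp
  then have ws: "w \<otimes> s = wprod G xs" using xs s by (simp add: m_assoc S_inv2)
  have l1: "len (w \<otimes> s) < len w" using len_le[OF xs] ws W(3) by simp
  from par_red[OF snoc.prems(1) snoc.prems(3)] obtain zs where zs: "reduced_expr G S zs w" "set zs \<subseteq> I" by blast
  from exchange_right[OF zs(1) s l1] obtain i where i: "i < length zs" "w \<otimes> s = wprod G (take i zs @ drop (Suc i) zs)" by blast
  have "take i zs @ drop (Suc i) zs \<in> lists I" using zs(2) set_del[of i zs] by auto
  then have p1: "w \<otimes> s \<in> parabolic G I" using i(2) par_wprod[OF snoc.prems(1)] by simp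
  have "s = inv w \<otimes> (w \<otimes> s)" using w s by (simp add: m_assoc[symmetric])
  moreover have "inv w \<otimes> (w \<otimes> s) \<in> parabolic G I"
    using par_mult[OF snoc.prems(1) par_inv[OF snoc.prems(1) snoc.prems(3)] p1] .
  ultimately have sI: "s \<in> I" using S_in_par[OF snoc.prems(1) s] by simp
  have "len w \<le> len (w \<otimes> s) + 1" using len_mult[OF w s] by linarith
  then have "reduced_expr G S xs (w \<otimes> s)" unfolding reduced_expr_def
    using xs ws len_le[OF xs] W(3) by simp
  from snoc.IH[OF snoc.prems(1) this p1] show ?case using sI by simp
qed

lemma supp_red: "reduced_expr G S ws w \<Longrightarrow> supp G S w = set ws"
proof
  assume r: "reduced_expr G S ws w"
  show "set ws \<subseteq> supp G S w" unfolding supp_def using r by blast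
  have WS: "set ws \<subseteq> S" using red_D[OF r] by auto
  have "w \<in> parabolic G (set ws)" using red_D[OF r] par_wprod[OF WS, of ws] by auto
  then show "supp G S w \<subseteq> set ws" unfolding supp_def using red_in_par[OF WS] by blast
qed

lemma supp_S: "w \<in> carrier G \<Longrightarrow> supp G S w \<subseteq> S"
proof -
  assume "w \<in> carrier G"
  then obtain ws where r: "reduced_expr G S ws w" using len_exists by metis
  then show ?thesis using supp_red[OF r] red_D[OF r] by auto
qed

lemma par_iff: "I \<subseteq> S \<Longrightarrow> w \<in> carrier G \<Longrightarrow> w \<in> parabolic G I \<longleftrightarrow> supp G S w \<subseteq> I"
proof -
  assume I: "I \<subseteq> S" and w: "w \<in> carrier G"
  then obtain ws where r: "reduced_expr G S ws w" using len_exists by metis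
  have WS: "ws \<in> lists S" "wprod G ws = w" using red_D[OF r] by auto
  show ?thesis
  proof
    assume "w \<in> parabolic G I"
    then show "supp G S w \<subseteq> I" using red_in_par[OF I r] supp_red[OF r] by simp
  next
    assume "supp G S w \<subseteq> I"
    then have "ws \<in> lists I" using supp_red[OF r] by auto
    then show "w \<in> parabolic G I" using par_wprod[OF I] WS by auto
  qed
qed

lemma par_supp: "w \<in> carrier G \<Longrightarrow> w \<in> parabolic G (supp G S w)"
  using par_iff[OF supp_S] by blast

end


context coxsys
begin

definition minc :: "'a set \<Rightarrow> 'a \<Rightarrow> bool" where
  "minc I u \<longleftrightarrow> u \<in> carrier G \<and> (\<forall>y \<in> parabolic G I. len u \<le> len (u \<otimes> y))"

lemma min_len_add_words: "I \<subseteq> S \<Longrightarrow> minc I u0 \<Longrightarrow> zs \<in> lists I \<Longrightarrow> length zs = len (wprod G zs) \<Longrightarrow>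
  len (u0 \<otimes> wprod G zs) = len u0 + length zs"
proof (induction zs rule: rev_induct)
  case Nil
  then show ?case unfolding minc_def by simp
next
  case (snoc s xs)
  have I: "I \<subseteq> S" using snoc.prems(1) .
  have u0: "u0 \<in> carrier G" and umin: "\<forall>y \<in> parabolic G I. len u0 \<le> len (u0 \<otimes> y)"
    using snoc.prems(2) unfolding minc_def by auto
  have xsI: "xs \<in> lists I" and sI: "s \<in> I" using snoc.prems(3) by auto
  have xs: "xs \<in> lists S" and s: "s \<in> S" using xsI sI I by auto
  define x' where "x' = wprod G xs"
  have x': "x' \<in> carrier G" unfolding x'_def using xs by simp
  have x'P: "x' \<in> parabolic G I" unfolding x'_def using par_wprod[OF I xsI] .
  have ez: "wprod G (xs @ [s]) = x' \<otimes> s" unfolding x'_def using xs s wprod_appendS[of xs "[s]"] by simp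
  have lz: "len (x' \<otimes> s) = length xs + 1" using snoc.prems(4) ez by simp
  have "len x' \<le> length xs" unfolding x'_def using len_le[OF xs] .
  moreover have "len (x' \<otimes> s) \<le> len x' + 1" using len_mult_le[OF x' s] .
  ultimately have lx: "length xs = len x'" using lz by simp
  have IH: "len (u0 \<otimes> x') = len u0 + length xs"
    using snoc.IH[OF I snoc.prems(2) xsI] lx unfolding x'_def by simp
  have ux: "u0 \<otimes> x' \<in> carrier G" using u0 x' by simp
  show ?case unfolding ez
  proof (rule ccontr)
    assume ne: "len (u0 \<otimes> (x' \<otimes> s)) \<noteq> len u0 + length (xs @ [s])"
    have "len (u0 \<otimes> x' \<otimes> s) < len (u0 \<otimes> x')"
      using len_mult[OF ux s] ne IH u0 x' s by (simp add: m_assoc)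
    obtain ru where ru: "reduced_expr G S ru u0" using len_exists u0 by metis
    have RU: "ru \<in> lists S" "wprod G ru = u0" "length ru = len u0" using red_D[OF ru] by auto
    have "reduced_expr G S (ru @ xs) (u0 \<otimes> x')" unfolding reduced_expr_def
      using RU xs IH wprod_appendS[of ru xs] unfolding x'_def by auto
    from exchange_right[OF this s \<open>len (u0 \<otimes> x' \<otimes> s) < len (u0 \<otimes> x')\<close>]
    obtain i where i: "i < length (ru @ xs)"
      "u0 \<otimes> x' \<otimes> s = wprod G (take i (ru @ xs) @ drop (Suc i) (ru @ xs))" by blast
    show False
    proof (cases "i < length ru")
      case True
      define d where "d = take i ru @ drop (Suc i) ru"
      have dS: "d \<in> lists S" unfolding d_def using del_lists[OF RU(1)] .
      have "take i (ru @ xs) @ drop (Suc i) (ru @ xs) = d @ xs" unfolding d_def using True by simp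
      then have "u0 \<otimes> x' \<otimes> s = wprod G d \<otimes> x'" using i(2) wprod_appendS[OF dS xs] unfolding x'_def by simp
      then have eq: "u0 \<otimes> x' \<otimes> s \<otimes> inv x' = wprod G d \<otimes> x' \<otimes> inv x'" by simp
      have dc: "wprod G d \<in> carrier G" using dS by simp
      have "u0 \<otimes> (x' \<otimes> s \<otimes> inv x') = u0 \<otimes> x' \<otimes> s \<otimes> inv x'" using u0 x' s by (simp add: m_assoc)
      also have "\<dots> = wprod G d" using eq dc x' by (simp add: m_assoc)
      finally have "u0 \<otimes> (x' \<otimes> s \<otimes> inv x') = wprod G d" .
      moreover have "x' \<otimes> s \<otimes> inv x' \<in> parabolic G I"
        using par_mult[OF I par_mult[OF I x'P par_S[OF sI I]] par_inv[OF I x'P]] .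
      ultimately have "len u0 \<le> len (wprod G d)" using umin by metis
      moreover have "len (wprod G d) \<le> length ru - 1" using len_le[OF dS] True unfolding d_def by simp
      ultimately show False using RU(3) True by linarith
    next
      case False
      define j where "j = i - length ru"
      define d where "d = take j xs @ drop (Suc j) xs"
      have dS: "d \<in> lists S" unfolding d_def using del_lists[OF xs] .
      have "take i (ru @ xs) @ drop (Suc i) (ru @ xs) = ru @ d" unfolding d_def j_def using False
        by (simp add: Suc_diff_le)
      then have "u0 \<otimes> x' \<otimes> s = u0 \<otimes> wprod G d" using i(2) wprod_appendS[OF RU(1) dS] RU by simp
      then have "x' \<otimes> s = wprod G d" using u0 x' s dS by (simp add: m_assoc)
      moreover have "len (wprod G d) \<le> length xs - 1" using len_le[OF dS] False i(1) unfolding d_def j_def by simp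
      ultimately show False using lz by simp
    qed
  qed
qed

lemma min_len_add: "I \<subseteq> S \<Longrightarrow> minc I u0 \<Longrightarrow> x \<in> parabolic G I \<Longrightarrow> len (u0 \<otimes> x) = len u0 + len x"
proof -
  assume a: "I \<subseteq> S" "minc I u0" "x \<in> parabolic G I"
  from par_red[OF a(1) a(3)] obtain zs where zs: "reduced_expr G S zs x" "set zs \<subseteq> I" by blast
  have Z: "wprod G zs = x" "length zs = len x" using red_D[OF zs(1)] by auto
  have "zs \<in> lists I" using zs(2) by auto
  from min_len_add_words[OF a(1,2) this] Z show ?thesis by simp
qed

lemma Xmin: "I \<subseteq> S \<Longrightarrow> u \<in> min_reps G S I \<Longrightarrow> minc I u0 \<Longrightarrow> x \<in> parabolic G I \<Longrightarrow> u = u0 \<otimes> x \<Longrightarrow> x = \<one>"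
proof (rule ccontr)
  assume a: "I \<subseteq> S" "u \<in> min_reps G S I" "minc I u0" "x \<in> parabolic G I" "u = u0 \<otimes> x" and ne: "x \<noteq> \<one>"
  have u0: "u0 \<in> carrier G" using a(3) unfolding minc_def by auto
  have x: "x \<in> carrier G" using par_carr[OF a(1) a(4)] .
  from par_red[OF a(1) a(4)] obtain zs where zs: "reduced_expr G S zs x" "set zs \<subseteq> I" by blast
  have Z: "zs \<in> lists S" "wprod G zs = x" "length zs = len x" using red_D[OF zs(1)] by auto
  have "zs \<noteq> []" using Z ne by auto
  then obtain xs s where zsd: "zs = xs @ [s]" by (cases zs rule: rev_exhaust) auto
  have sI: "s \<in> I" and s: "s \<in> S" and xs: "xs \<in> lists S" using zs(2) a(1) zsd Z(1) by auto
  have "x = wprod G xs \<otimes> s" using Z(2) zsd wprod_appendS[OF xs, of "[s]"] s by simp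
  then have xs_eq: "x \<otimes> s = wprod G xs" using xs s by (simp add: m_assoc S_inv2)
  have lxs: "len (x \<otimes> s) < len x" using len_le[OF xs] xs_eq Z(3) zsd by simp
  have xsP: "x \<otimes> s \<in> parabolic G I" using par_mult[OF a(1) a(4) par_S[OF sI a(1)]] .
  have "len (u \<otimes> s) = len (u0 \<otimes> (x \<otimes> s))" using a(5) u0 x s by (simp add: m_assoc)
  also have "\<dots> = len u0 + len (x \<otimes> s)" using min_len_add[OF a(1) a(3) xsP] .
  also have "\<dots> < len u0 + len x" using lxs by simp
  also have "\<dots> = len u" using min_len_add[OF a(1) a(3) a(4)] a(5) by simp
  finally have "len (u \<otimes> s) < len u" .
  moreover have "len (u \<otimes> s) > len u" using a(2) sI unfolding min_reps_def by auto
  ultimately show False by simp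
qed

lemma exists_min: "I \<subseteq> S \<Longrightarrow> w \<in> carrier G \<Longrightarrow> \<exists>y \<in> parabolic G I. minc I (w \<otimes> y)"
proof -
  assume I: "I \<subseteq> S" and w: "w \<in> carrier G"
  define P where "P = (\<lambda>n. \<exists>y \<in> parabolic G I. len (w \<otimes> y) = n)"
  have "P (len (w \<otimes> \<one>))" unfolding P_def using par_one[OF I] by blast
  then have "P (Least P)" by (rule LeastI)
  then obtain y where y: "y \<in> parabolic G I" "len (w \<otimes> y) = Least P" unfolding P_def by blast
  have "minc I (w \<otimes> y)" unfolding minc_def
  proof (intro conjI ballI)
    show "w \<otimes> y \<in> carrier G" using w par_carr[OF I y(1)] by simp
    fix z assume z: "z \<in> parabolic G I"
    have yz: "y \<otimes> z \<in> parabolic G I" using par_mult[OF I y(1) z] .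
    then have "P (len (w \<otimes> (y \<otimes> z)))" unfolding P_def by blast
    then have "Least P \<le> len (w \<otimes> (y \<otimes> z))" by (rule Least_le)
    then show "len (w \<otimes> y) \<le> len (w \<otimes> y \<otimes> z)"
      using y(2) w par_carr[OF I y(1)] par_carr[OF I z] by (simp add: m_assoc)
  qed
  then show ?thesis using y(1) by blast
qed

lemma X_minc: "I \<subseteq> S \<Longrightarrow> u \<in> min_reps G S I \<Longrightarrow> minc I u"
proof -
  assume I: "I \<subseteq> S" and u: "u \<in> min_reps G S I"
  have uc: "u \<in> carrier G" using u unfolding min_reps_def by auto
  from exists_min[OF I uc] obtain y where y: "y \<in> parabolic G I" "minc I (u \<otimes> y)" by blast
  have yc: "y \<in> carrier G" using par_carr[OF I y(1)] .
  have "u = (u \<otimes> y) \<otimes> inv y" using uc yc by (simp add: m_assoc)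
  from Xmin[OF I u y(2) par_inv[OF I y(1)] this] have "inv y = \<one>" .
  then have "u \<otimes> y = u" using uc yc by (metis inv_inv one_closed inv_one r_one)
  then show ?thesis using y(2) by simp
qed

lemma len_add: "I \<subseteq> S \<Longrightarrow> u \<in> min_reps G S I \<Longrightarrow> x \<in> parabolic G I \<Longrightarrow> len (u \<otimes> x) = len u + len x"
  using min_len_add X_minc by blast

lemma factor_unique: "I \<subseteq> S \<Longrightarrow> u1 \<in> min_reps G S I \<Longrightarrow> u2 \<in> min_reps G S I \<Longrightarrow>
   x1 \<in> parabolic G I \<Longrightarrow> x2 \<in> parabolic G I \<Longrightarrow> u1 \<otimes> x1 = u2 \<otimes> x2 \<Longrightarrow> u1 = u2"
proof -
  assume a: "I \<subseteq> S" "u1 \<in> min_reps G S I" "u2 \<in> min_reps G S I"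
    "x1 \<in> parabolic G I" "x2 \<in> parabolic G I" "u1 \<otimes> x1 = u2 \<otimes> x2"
  have c: "u1 \<in> carrier G" "u2 \<in> carrier G" "x1 \<in> carrier G" "x2 \<in> carrier G"
    using a par_carr unfolding min_reps_def by auto
  have "u1 \<otimes> (x1 \<otimes> inv x2) = u2 \<otimes> x2 \<otimes> inv x2" using a(6) c by (simp add: m_assoc[symmetric])
  also have "\<dots> = u2" using c by (simp add: m_assoc)
  finally have "u2 = u1 \<otimes> (x1 \<otimes> inv x2)" by simp
  from Xmin[OF a(1) a(3) X_minc[OF a(1) a(2)] par_mult[OF a(1) a(4) par_inv[OF a(1) a(5)]] this]
  have "x1 \<otimes> inv x2 = \<one>" .
  then show ?thesis using \<open>u2 = u1 \<otimes> (x1 \<otimes> inv x2)\<close> c by simp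
qed

lemma factor_exists: "I \<subseteq> S \<Longrightarrow> w \<in> carrier G \<Longrightarrow> \<exists>u \<in> min_reps G S I. \<exists>x \<in> parabolic G I. w = u \<otimes> x"
proof -
  assume I: "I \<subseteq> S" and w: "w \<in> carrier G"
  from exists_min[OF I w] obtain y where y: "y \<in> parabolic G I" "minc I (w \<otimes> y)" by blast
  have yc: "y \<in> carrier G" using par_carr[OF I y(1)] .
  have "w \<otimes> y \<in> min_reps G S I" unfolding min_reps_def
  proof (intro CollectI conjI ballI)
    show "w \<otimes> y \<in> carrier G" using w yc by simp
    fix s assume sI: "s \<in> I"
    have s: "s \<in> S" using sI I by auto
    have "len (w \<otimes> y) \<le> len (w \<otimes> y \<otimes> s)" using y(2) par_S[OF sI I] unfolding minc_def by blast
    moreover have "len (w \<otimes> y \<otimes> s) \<noteq> len (w \<otimes> y)" using len_parity[of "w \<otimes> y" s] w yc s by simp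
    ultimately show "len (w \<otimes> y) < len (w \<otimes> y \<otimes> s)" by simp
  qed
  moreover have "w = (w \<otimes> y) \<otimes> inv y" using w yc by (simp add: m_assoc)
  ultimately show ?thesis using par_inv[OF I y(1)] by blast
qed

lemma par_unique: "I \<subseteq> S \<Longrightarrow> u \<in> min_reps G S I \<Longrightarrow> x \<in> parabolic G I \<Longrightarrow>
   par_quot G S I (u \<otimes> x) = u \<and> par_comp G S I (u \<otimes> x) = x"
proof
  assume a: "I \<subseteq> S" "u \<in> min_reps G S I" "x \<in> parabolic G I"
  have c: "u \<in> carrier G" "x \<in> carrier G" using a par_carr unfolding min_reps_def by auto
  show "par_quot G S I (u \<otimes> x) = u" unfolding par_quot_def
  proof (rule the_equality)
    show "u \<in> min_reps G S I \<and> (\<exists>x' \<in> parabolic G I. u \<otimes> x = u \<otimes> x')" using a by blast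
    fix u' assume "u' \<in> min_reps G S I \<and> (\<exists>x' \<in> parabolic G I. u \<otimes> x = u' \<otimes> x')"
    then show "u' = u" using factor_unique[OF a(1) a(2)] a(3) by metis
  qed
  show "par_comp G S I (u \<otimes> x) = x" unfolding par_comp_def
  proof (rule the_equality)
    show "x \<in> parabolic G I \<and> (\<exists>u' \<in> min_reps G S I. u \<otimes> x = u' \<otimes> x)" using a by blast
    fix x' assume h: "x' \<in> parabolic G I \<and> (\<exists>u' \<in> min_reps G S I. u \<otimes> x = u' \<otimes> x')"
    then obtain u' where u': "u' \<in> min_reps G S I" "u \<otimes> x = u' \<otimes> x'" by blast
    have "u' = u" using factor_unique[OF a(1) a(2) u'(1) a(3)] h u'(2) by metis
    then show "x' = x" using u'(2) c h par_carr[OF a(1)] by (metis l_cancel)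
  qed
qed

lemma par_decomp: "I \<subseteq> S \<Longrightarrow> w \<in> carrier G \<Longrightarrow> par_quot G S I w \<in> min_reps G S I \<and>
   par_comp G S I w \<in> parabolic G I \<and> w = par_quot G S I w \<otimes> par_comp G S I w"
proof -
  assume I: "I \<subseteq> S" and w: "w \<in> carrier G"
  from factor_exists[OF I w] obtain u x where ux: "u \<in> min_reps G S I" "x \<in> parabolic G I" "w = u \<otimes> x" by blast
  from par_unique[OF I ux(1,2)] ux show ?thesis by simp
qed

end


context coxsys
begin

lemma L_lemma: "J \<subseteq> S \<Longrightarrow> I \<subseteq> J \<Longrightarrow> a \<in> min_reps G S J \<Longrightarrow> b \<in> parabolic G J \<Longrightarrow>
  par_comp G S I (a \<otimes> b) = par_comp G S I b \<and> par_quot G S I (a \<otimes> b) = a \<otimes> par_quot G S I b"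
proof -
  assume J: "J \<subseteq> S" and IJ: "I \<subseteq> J" and a: "a \<in> min_reps G S J" and b: "b \<in> parabolic G J"
  have I: "I \<subseteq> S" using J IJ by auto
  have ac: "a \<in> carrier G" using a unfolding min_reps_def by auto
  have bc: "b \<in> carrier G" using par_carr[OF J b] .
  define bq where "bq = par_quot G S I b"
  define bc' where "bc' = par_comp G S I b"
  have D: "bq \<in> min_reps G S I" "bc' \<in> parabolic G I" "b = bq \<otimes> bc'"
    using par_decomp[OF I bc] unfolding bq_def bc'_def by auto
  have bqc: "bq \<in> carrier G" using D(1) unfolding min_reps_def by auto
  have bcc: "bc' \<in> carrier G" using par_carr[OF I D(2)] .
  have bcJ: "bc' \<in> parabolic G J" using par_mono[OF IJ J] D(2) by auto
  have "bq = b \<otimes> inv bc'" using D(3) bqc bcc by (simp add: m_assoc)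
  then have bqJ: "bq \<in> parabolic G J" using par_mult[OF J b par_inv[OF J bcJ]] by simp
  have "a \<otimes> bq \<in> min_reps G S I" unfolding min_reps_def
  proof (intro CollectI conjI ballI)
    show "a \<otimes> bq \<in> carrier G" using ac bqc by simp
    fix r assume rI: "r \<in> I"
    have r: "r \<in> S" "r \<in> J" using rI IJ I by auto
    have bqr: "bq \<otimes> r \<in> parabolic G J" using par_mult[OF J bqJ par_S[OF r(2) J]] .
    have "len (a \<otimes> bq \<otimes> r) = len (a \<otimes> (bq \<otimes> r))" using ac bqc r by (simp add: m_assoc)
    also have "\<dots> = len a + len (bq \<otimes> r)" using len_add[OF J a bqr] .
    also have "\<dots> > len a + len bq" using D(1) rI unfolding min_reps_def by auto
    also have "len a + len bq = len (a \<otimes> bq)" using len_add[OF J a bqJ] by simp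
    finally show "len (a \<otimes> bq) < len (a \<otimes> bq \<otimes> r)" .
  qed
  moreover have "a \<otimes> b = (a \<otimes> bq) \<otimes> bc'" using D(3) ac bqc bcc by (simp add: m_assoc)
  ultimately show ?thesis using par_unique[OF I _ D(2)] unfolding bq_def[symmetric] bc'_def[symmetric]
    by metis
qed

lemma supp_concat: "I \<subseteq> S \<Longrightarrow> u \<in> min_reps G S I \<Longrightarrow> x \<in> parabolic G I \<Longrightarrow>
  supp G S (u \<otimes> x) = supp G S u \<union> supp G S x"
proof -
  assume I: "I \<subseteq> S" and u: "u \<in> min_reps G S I" and x: "x \<in> parabolic G I"
  have uc: "u \<in> carrier G" using u unfolding min_reps_def by auto
  have xc: "x \<in> carrier G" using par_carr[OF I x] .
  obtain ru where ru: "reduced_expr G S ru u" using len_exists uc by metis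
  obtain rx where rx: "reduced_expr G S rx x" using len_exists xc by metis
  have RU: "ru \<in> lists S" "wprod G ru = u" "length ru = len u" using red_D[OF ru] by auto
  have RX: "rx \<in> lists S" "wprod G rx = x" "length rx = len x" using red_D[OF rx] by auto
  have "reduced_expr G S (ru @ rx) (u \<otimes> x)" unfolding reduced_expr_def
    using RU RX len_add[OF I u x] wprod_appendS[OF RU(1) RX(1)] by auto
  then show ?thesis using supp_red[OF ru] supp_red[OF rx] supp_red by simp
qed

lemma descent_in_supp: "z \<in> carrier G \<Longrightarrow> s \<in> S \<Longrightarrow> len (z \<otimes> s) < len z \<Longrightarrow> s \<in> supp G S z"
proof -
  assume z: "z \<in> carrier G" and s: "s \<in> S" and l: "len (z \<otimes> s) < len z"
  obtain rz where rz: "reduced_expr G S rz z" using len_exists z by metis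
  have K: "supp G S z \<subseteq> S" using supp_S[OF z] .
  from exchange_right[OF rz s l] obtain i where i: "i < length rz" "z \<otimes> s = wprod G (take i rz @ drop (Suc i) rz)" by blast
  have "take i rz @ drop (Suc i) rz \<in> lists (supp G S z)" using set_del[of i rz] supp_red[OF rz] by auto
  then have p1: "z \<otimes> s \<in> parabolic G (supp G S z)" using i(2) par_wprod[OF K] by simp
  have "s = inv z \<otimes> (z \<otimes> s)" using z s by (simp add: m_assoc[symmetric])
  moreover have "inv z \<otimes> (z \<otimes> s) \<in> parabolic G (supp G S z)"
    using par_mult[OF K par_inv[OF K par_supp[OF z]] p1] .
  ultimately show ?thesis using S_in_par[OF K s] by simp
qed

lemma nontriv_descent: "y \<in> carrier G \<Longrightarrow> y \<noteq> \<one> \<Longrightarrow> \<exists>s \<in> S. len (y \<otimes> s) < len y \<and> s \<in> supp G S y"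
proof -
  assume y: "y \<in> carrier G" "y \<noteq> \<one>"
  obtain zs where zs: "reduced_expr G S zs y" using len_exists y by metis
  have Z: "zs \<in> lists S" "wprod G zs = y" "length zs = len y" using red_D[OF zs] by auto
  have "zs \<noteq> []" using Z y by auto
  then obtain xs s where zsd: "zs = xs @ [s]" by (cases zs rule: rev_exhaust) auto
  have s: "s \<in> S" and xs: "xs \<in> lists S" using zsd Z(1) by auto
  have "y = wprod G xs \<otimes> s" using Z(2) zsd wprod_appendS[OF xs, of "[s]"] s by simp
  then have "y \<otimes> s = wprod G xs" using xs s by (simp add: m_assoc S_inv2)
  then have "len (y \<otimes> s) < len y" using len_le[OF xs] Z(3) zsd by simp
  moreover have "s \<in> supp G S y" using supp_red[OF zs] zsd by simp
  ultimately show ?thesis using s by blast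
qed

end

context coxsys
begin

lemma main_loc:
  assumes uc: "u \<in> carrier G" and vc: "v \<in> carrier G" and cov: "covers_in G S u v u'"
  shows "\<exists>s \<in> descents G S (par_quot G S (supp G S u) v).
           u' = par_comp G S (supp G S u \<union> {s}) (par_quot G S (supp G S u) v) \<otimes> u
         \<and> cosupp G S u' = cosupp G S u - {s}"
proof -
  define I where "I = supp G S u"
  have lt: "cox_less G S u u'" and le: "cox_le G S u' v"
    and nomid: "\<not> (\<exists>w \<in> carrier G. cox_less G S u w \<and> cox_less G S w u')"
    using cov unfolding covers_in_def by auto
  have u'c: "u' \<in> carrier G" and pu: "par_comp G S I u' = u" and neq: "u \<noteq> u'"
    using lt unfolding cox_less_def cox_le_def I_def by auto
  define J where "J = supp G S u'"
  have pv: "par_comp G S J v = u'" using le unfolding cox_le_def J_def by auto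
  have I: "I \<subseteq> S" unfolding I_def using supp_S[OF uc] .
  have J: "J \<subseteq> S" unfolding J_def using supp_S[OF u'c] .
  have uI: "u \<in> parabolic G I" unfolding I_def using par_supp[OF uc] .
  have u'J: "u' \<in> parabolic G J" unfolding J_def using par_supp[OF u'c] .
  define y where "y = par_quot G S I u'"
  have Dy: "y \<in> min_reps G S I" "u' = y \<otimes> u" using par_decomp[OF I u'c] pu unfolding y_def by auto
  have yc: "y \<in> carrier G" using Dy(1) unfolding min_reps_def by auto
  define x' where "x' = par_quot G S J v"
  have Dx: "x' \<in> min_reps G S J" "v = x' \<otimes> u'" using par_decomp[OF J vc] pv unfolding x'_def by auto
  have x'c: "x' \<in> carrier G" using Dx(1) unfolding min_reps_def by auto
  have suppu': "J = supp G S y \<union> I" unfolding J_def I_def using supp_concat[OF I Dy(1) uI] Dy(2) by simp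
  have IJ: "I \<subseteq> J" using suppu' by auto
  have uJ: "u \<in> parabolic G J" using par_mono[OF IJ J] uI by auto
  have "y = u' \<otimes> inv u" using Dy(2) yc uc by (simp add: m_assoc)
  then have yJ: "y \<in> parabolic G J" using par_mult[OF J u'J par_inv[OF J uJ]] by simp
  define x where "x = par_quot G S I v"
  have xe: "x = x' \<otimes> y" using L_lemma[OF J IJ Dx(1) u'J] Dx(2) unfolding x_def y_def by simp
  have xc: "x \<in> carrier G" using xe x'c yc by simp
  have yne: "y \<noteq> \<one>" using Dy(2) neq uc by auto
  from nontriv_descent[OF yc yne] obtain s where s: "s \<in> S" "len (y \<otimes> s) < len y" "s \<in> supp G S y" by blast
  have sJ: "s \<in> J" using s(3) suppu' by auto
  have snI: "s \<notin> I"
  proof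
    assume "s \<in> I"
    then have "len y < len (y \<otimes> s)" using Dy(1) unfolding min_reps_def by auto
    then show False using s(2) by simp
  qed
  define K where "K = I \<union> {s}"
  have KJ: "K \<subseteq> J" unfolding K_def using IJ sJ by auto
  have K: "K \<subseteq> S" using KJ J by auto
  have ysJ: "y \<otimes> s \<in> parabolic G J" using par_mult[OF J yJ par_S[OF sJ J]] .
  have desc: "s \<in> descents G S x"
  proof -
    have "len (x \<otimes> s) = len (x' \<otimes> (y \<otimes> s))" using xe x'c yc s(1) by (simp add: m_assoc)
    also have "\<dots> = len x' + len (y \<otimes> s)" using len_add[OF J Dx(1) ysJ] .
    also have "\<dots> < len x' + len y" using s(2) by simp
    also have "\<dots> = len x" using len_add[OF J Dx(1) yJ] xe by simp
    finally show ?thesis unfolding descents_def using s(1) by simp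
  qed
  define z where "z = par_comp G S K x"
  have ze: "z = par_comp G S K y" using L_lemma[OF J KJ Dx(1) yJ] xe unfolding z_def by simp
  define yK where "yK = par_quot G S K y"
  have Dz: "yK \<in> min_reps G S K" "z \<in> parabolic G K" "y = yK \<otimes> z"
    using par_decomp[OF K yc] unfolding ze yK_def by auto
  have yKc: "yK \<in> carrier G" using Dz(1) unfolding min_reps_def by auto
  have zc: "z \<in> carrier G" using par_carr[OF K Dz(2)] .
  have lenz: "len (y \<otimes> r) = len yK + len (z \<otimes> r)" if "r \<in> K" for r
  proof -
    have r: "r \<in> S" using that K by auto
    have "len (y \<otimes> r) = len (yK \<otimes> (z \<otimes> r))" using Dz(3) yKc zc r by (simp add: m_assoc)
    also have "\<dots> = len yK + len (z \<otimes> r)" using len_add[OF K Dz(1) par_mult[OF K Dz(2) par_S[OF that K]]] .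
    finally show ?thesis .
  qed
  have leny: "len y = len yK + len z" using len_add[OF K Dz(1) Dz(2)] Dz(3) by simp
  have zX: "z \<in> min_reps G S I" unfolding min_reps_def
  proof (intro CollectI conjI ballI)
    show "z \<in> carrier G" using zc .
    fix r assume rI: "r \<in> I"
    have "len y < len (y \<otimes> r)" using Dy(1) rI unfolding min_reps_def by auto
    then show "len z < len (z \<otimes> r)" using lenz[of r] leny rI unfolding K_def by simp
  qed
  have zs: "len (z \<otimes> s) < len z" using lenz[of s] leny s(2) unfolding K_def by simp
  define w where "w = z \<otimes> u"
  have wc: "w \<in> carrier G" unfolding w_def using zc uc by simp
  have suppz: "supp G S z \<subseteq> K" using par_iff[OF K zc] Dz(2) by auto
  have sz: "s \<in> supp G S z" using descent_in_supp[OF zc s(1) zs] .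
  have suppw: "supp G S w = K" unfolding w_def using supp_concat[OF I zX uI] suppz sz
    unfolding I_def[symmetric] K_def by auto
  have uw: "cox_less G S u w"
  proof -
    have "par_comp G S I w = u" unfolding w_def using par_unique[OF I zX uI] by simp
    moreover have "u \<noteq> w"
    proof
      assume "u = w"
      then have "z = \<one>" unfolding w_def using zc uc by (metis l_one r_cancel one_closed)
      then show False using zs s(1) by simp
    qed
    ultimately show ?thesis unfolding cox_less_def cox_le_def using uc wc I_def by simp
  qed
  have wu': "cox_le G S w u'"
  proof -
    have IK: "I \<subseteq> K" unfolding K_def by auto
    have wK: "w \<in> parabolic G K" unfolding w_def
      using par_mult[OF K Dz(2)] par_mono[OF IK K] uI by auto
    have "u' = yK \<otimes> w" unfolding w_def using Dy(2) Dz(3) yKc zc uc by (simp add: m_assoc)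
    then have "par_comp G S K u' = w" using par_unique[OF K Dz(1) wK] by simp
    then show ?thesis unfolding cox_le_def using wc u'c suppw by simp
  qed
  have "w = u'"
  proof (rule ccontr)
    assume "w \<noteq> u'"
    then have "cox_less G S w u'" using wu' unfolding cox_less_def by simp
    then show False using nomid uw wc by blast
  qed
  then have fin1: "u' = par_comp G S (I \<union> {s}) x \<otimes> u" unfolding w_def z_def K_def by simp
  have "supp G S u' = I \<union> {s}" using suppw \<open>w = u'\<close> unfolding K_def by simp
  then have fin2: "cosupp G S u' = cosupp G S u - {s}" unfolding cosupp_def I_def by auto
  show ?thesis using desc fin1 fin2 unfolding x_def I_def by blast
qed

end

theorem mainTheorem10:
  fixes G :: "('a, 'b) monoid_scheme" and S :: "'a set" and u v u' :: 'a
  assumes "coxeter_system G S"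
    and "u \<in> carrier G" and "v \<in> carrier G"
    and "cox_less G S u v"
    and "covers_in G S u v u'"
  shows "\<exists>s \<in> descents G S (par_quot G S (supp G S u) v).
           u' = par_comp G S (supp G S u \<union> {s}) (par_quot G S (supp G S u) v) \<otimes>\<^bsub>G\<^esub> u
         \<and> cosupp G S u' = cosupp G S u - {s}"
proof -
  interpret coxsys G S using assms(1) by unfold_locales
  show ?thesis using main_loc[OF assms(2,3,5)] .
qed


end
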